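(* Assume that for every company $i\in\mathcal C$, every vehicle of company $i$ can reach at least one station and $\overline{\mathcal K}_i\ne\emptyset$. Under the system optimal pricing policies $p_i$, every Nash equilibrium $x^*$ of the game $G$ satisfies $$x^*\in\arg\min_{x\in\overline{\mathcal K}}J_G(\sigma(x)),\qquad J_G(\sigma)=\tfrac12\sigma^TA_G\sigma+b_G^T\sigma .$$
   Context: Setting: $\mathcal C$ is a finite nonempty set of companies; $\mathcal M$ is a finite set of charging stations with $m=|\mathcal M|\ge2$. Company $i$ owns a finite set $\mathcal V_i$ of vehicles, $N_i=|\mathcal V_i|\ge1$, and $\mathcal F^i_j\subseteq\mathcal V_i$ is the set of its vehicles that can reach station $j$. $\mathcal P_{\mathcal M}=\{x\in\mathbb R_{\ge0}^{\mathcal M}:\sum_j x_j=1\}$. For each $i$, $\overline{\mathcal K}_i$ is the set of $x^i\in\mathcal P_{\mathcal M}$ such that for every proper subset $S\subsetneq\mathcal M$: $N_i\sum_{j\in S}x^i_j\le\max\{0,|\bigcup_{j\in S}\mathcal F^i_j|-|S|\}$. Let $\overline{\mathcal K}=\prod_{i\in\mathcal C}\overline{\mathcal K}_i$; for $x=(x^i)_{i\in\mathcal C}\in\overline{\mathcal K}$ write $x^{-i}=(x^j)_{j\ne i}$, $\sigma(x)=\sum_{i}N_ix^i$, $\sigma(x^{-i})=\sum_{j\neq i}N_jx^j$. Data: $A_G\in\mathbb R^{\mathcal M\times\mathcal M}$ diagonal positive definite, $b_G\in\mathbb R^{\mathcal M}$; for each $i$, diagonal matrices $A_i,B_i\in\mathbb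 R^{\mathcal M\times\mathcal M}$, vectors $c_i,f_i\in\mathbb R^{\mathcal M}$, and a diagonal positive semidefinite $D_i$ with $(D_i)_{jj}>0$ whenever $\mathcal F^i_j\neq\emptyset$. For a diagonal matrix $D$, $D^*$ is the diagonal matrix with $D^*_{jj}=1/D_{jj}$ if $D_{jj}\ne0$ and $0$ otherwise. System optimal pricing policies: $p_i(x^i,x^{-i})=D_i^*\big[\tfrac12\overline A_ix^i+\overline B_i\sigma(x^{-i})+\Delta_i\big]$ with $\overline A_i=N_i^2A_G-A_i$, $\overline B_i=N_iA_G-B_i$, $\Delta_i=N_ib_G-c_i-f_i$. Company cost: $J^i(x^i,x^{-i})=\tfrac12(x^i)^TA_ix^i+(x^i)^TB_i\sigma(x^{-i})+c_i^Tx^i+(x^i)^TD_ip_i(x^i,x^{-i})+f_i^Tx^i$. Game $G$: each company $i$ chooses $x^i\in\overline{\mathcal K}_i$ to minimize $J^i(x^i,x^{-i})$. A Nash equilibrium is $x^*\in\overline{\mathcal K}$ with $J^i(x^{*i},x^{*-i})\le J^i(y^i,x^{*-i})$ for all $y^i\in\overline{\mathcal K}_i$ and all $i\in\mathcal C$. *)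

theory Defs
  imports Complex_Main
begin

text \<open>All matrices in the model are diagonal; a diagonal matrix on the station set is
represented by its diagonal, a function from stations to reals. Vectors in R^M are
functions from stations to reals (only values on M matter).\<close>

definition prob_simplex :: "'m set \<Rightarrow> ('m \<Rightarrow> real) set" where
  "prob_simplex M = {x. (\<forall>j\<in>M. 0 \<le> x j) \<and> (\<forall>j. j \<notin> M \<longrightarrow> x j = 0) \<and> (\<Sum>j\<in>M. x j) = 1}"

text \<open>Feasible set of company i: N = number of vehicles, F j = vehicles able to reach j.\<close>
definition Kbar_i :: "'m set \<Rightarrow> nat \<Rightarrow> ('m \<Rightarrow> 'v set) \<Rightarrow> ('m \<Rightarrow> real) set" where
  "Kbar_i M N F = {x \<in> prob_simplex M. \<forall>S. S \<subset> M \<longrightarrow>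
      real N * (\<Sum>j\<in>S. x j) \<le> max 0 (real (card (\<Union>j\<in>S. F j)) - real (card S))}"

definition Kbar :: "'c set \<Rightarrow> 'm set \<Rightarrow> ('c \<Rightarrow> 'v set) \<Rightarrow> ('c \<Rightarrow> 'm \<Rightarrow> 'v set)
    \<Rightarrow> ('c \<Rightarrow> 'm \<Rightarrow> real) set" where
  "Kbar C M V F = {x. \<forall>i\<in>C. x i \<in> Kbar_i M (card (V i)) (F i)}"

text \<open>sigma(x) restricted to a set of companies I (I = C gives sigma(x), I = C - {i} gives sigma(x^{-i})).\<close>
definition agg :: "'c set \<Rightarrow> ('c \<Rightarrow> 'v set) \<Rightarrow> ('c \<Rightarrow> 'm \<Rightarrow> real) \<Rightarrow> 'm \<Rightarrow> real" where
  "agg I V x = (\<lambda>j. \<Sum>i\<in>I. real (card (V i)) * x i j)"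

definition Dstar :: "real \<Rightarrow> real" where
  "Dstar d = (if d \<noteq> 0 then 1 / d else 0)"

text \<open>System optimal price of company i at station j, given own strategy xi and
sigma(x^{-i}) = s; N = N_i.\<close>
definition price :: "('m \<Rightarrow> real) \<Rightarrow> ('m \<Rightarrow> real) \<Rightarrow> nat \<Rightarrow> ('m \<Rightarrow> real) \<Rightarrow> ('m \<Rightarrow> real)
    \<Rightarrow> ('m \<Rightarrow> real) \<Rightarrow> ('m \<Rightarrow> real) \<Rightarrow> ('m \<Rightarrow> real) \<Rightarrow> ('m \<Rightarrow> real) \<Rightarrow> ('m \<Rightarrow> real) \<Rightarrow> 'm \<Rightarrow> real" where
  "price AG bG N A B c f D xi s = (\<lambda>j. Dstar (D j) *
      ((1/2) * (real N ^ 2 * AG j - A j) * xi j + (real N * AG j - B j) * s j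
       + (real N * bG j - c j - f j)))"

text \<open>Company cost J^i(x^i, x^{-i}) with s = sigma(x^{-i}).\<close>
definition Jcomp :: "'m set \<Rightarrow> ('m \<Rightarrow> real) \<Rightarrow> ('m \<Rightarrow> real) \<Rightarrow> nat \<Rightarrow> ('m \<Rightarrow> real) \<Rightarrow> ('m \<Rightarrow> real)
    \<Rightarrow> ('m \<Rightarrow> real) \<Rightarrow> ('m \<Rightarrow> real) \<Rightarrow> ('m \<Rightarrow> real) \<Rightarrow> ('m \<Rightarrow> real) \<Rightarrow> ('m \<Rightarrow> real) \<Rightarrow> real" where
  "Jcomp M AG bG N A B c f D xi s =
     (1/2) * (\<Sum>j\<in>M. A j * xi j ^ 2) + (\<Sum>j\<in>M. xi j * B j * s j) + (\<Sum>j\<in>M. c j * xi j)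
     + (\<Sum>j\<in>M. xi j * D j * price AG bG N A B c f D xi s j) + (\<Sum>j\<in>M. f j * xi j)"

definition JG :: "'m set \<Rightarrow> ('m \<Rightarrow> real) \<Rightarrow> ('m \<Rightarrow> real) \<Rightarrow> ('m \<Rightarrow> real) \<Rightarrow> real" where
  "JG M AG bG s = (1/2) * (\<Sum>j\<in>M. AG j * s j ^ 2) + (\<Sum>j\<in>M. bG j * s j)"

definition nash_eq :: "'c set \<Rightarrow> 'm set \<Rightarrow> ('c \<Rightarrow> 'v set) \<Rightarrow> ('c \<Rightarrow> 'm \<Rightarrow> 'v set)
    \<Rightarrow> ('m \<Rightarrow> real) \<Rightarrow> ('m \<Rightarrow> real)
    \<Rightarrow> ('c \<Rightarrow> 'm \<Rightarrow> real) \<Rightarrow> ('c \<Rightarrow> 'm \<Rightarrow> real) \<Rightarrow> ('c \<Rightarrow> 'm \<Rightarrow> real) \<Rightarrow> ('c \<Rightarrow> 'm \<Rightarrow> real)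
    \<Rightarrow> ('c \<Rightarrow> 'm \<Rightarrow> real) \<Rightarrow> ('c \<Rightarrow> 'm \<Rightarrow> real) \<Rightarrow> bool" where
  "nash_eq C M V F AG bG A B c f D x \<longleftrightarrow>
     x \<in> Kbar C M V F \<and>
     (\<forall>i\<in>C. \<forall>y \<in> Kbar_i M (card (V i)) (F i).
        Jcomp M AG bG (card (V i)) (A i) (B i) (c i) (f i) (D i) (x i) (agg (C - {i}) V x)
        \<le> Jcomp M AG bG (card (V i)) (A i) (B i) (c i) (f i) (D i) y (agg (C - {i}) V x))"

end

theory Submission
  imports Defs
begin

lemma zero_lem:
  assumes "xi \<in> Kbar_i M N F" "finite M" "card M \<ge> 2" "j \<in> M" "F j = {}" "N \<ge> 1"
  shows "xi j = 0"
proof -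
  have sub: "{j} \<subset> M"
  proof -
    have "M \<noteq> {j}" using assms(3) by auto
    thus ?thesis using assms(4) by auto
  qed
  from assms(1) have nn: "xi j \<ge> 0" and le: "real N * (\<Sum>k\<in>{j}. xi k) \<le> max 0 (real (card (\<Union>k\<in>{j}. F k)) - real (card {j}))"
    using sub assms(4) unfolding Kbar_i_def prob_simplex_def by blast+
  hence "real N * xi j \<le> 0" using assms(5) by simp
  moreover have "real N > 0" using assms(6) by simp
  ultimately have "xi j \<le> 0" by (simp add: mult_le_0_iff)
  thus ?thesis using nn by simp
qed

lemma Jcomp_eq:
  assumes "finite M" "card M \<ge> 2" "N \<ge> 1" "\<forall>j\<in>M. D j \<ge> 0" "\<forall>j\<in>M. F j \<noteq> {} \<longrightarrow> D j > 0"
    "xi \<in> Kbar_i M N F"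
  shows "Jcomp M AG bG N A B c f D xi s = JG M AG bG (\<lambda>j. real N * xi j + s j) - JG M AG bG s"
proof -
  define E where "E j = (1/2) * (real N ^ 2 * AG j - A j) * xi j + (real N * AG j - B j) * s j
       + (real N * bG j - c j - f j)" for j
  have eq: "xi j * D j * price AG bG N A B c f D xi s j = xi j * E j" if "j \<in> M" for j
  proof (cases "D j = 0")
    case True
    hence "F j = {}" using assms(5) that by auto
    hence "xi j = 0" using zero_lem[OF assms(6) assms(1) assms(2) that _ assms(3)] by simp
    thus ?thesis by simp
  next
    case False
    thus ?thesis unfolding price_def E_def Dstar_def by simp
  qed
  have "Jcomp M AG bG N A B c f D xi s =
     (1/2) * (\<Sum>j\<in>M. A j * xi j ^ 2) + (\<Sum>j\<in>M. xi j * B j * s j) + (\<Sum>j\<in>M. c j * xi j)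
     + (\<Sum>j\<in>M. xi j * E j) + (\<Sum>j\<in>M. f j * xi j)"
    unfolding Jcomp_def using sum.cong[OF refl eq, of M] by simp
  also have "\<dots> = (\<Sum>j\<in>M. (1/2) * A j * xi j ^ 2 + xi j * B j * s j + c j * xi j + xi j * E j + f j * xi j)"
    by (simp add: sum.distrib sum_distrib_left mult.assoc)
  also have "\<dots> = (\<Sum>j\<in>M. ((1/2) * AG j * (real N * xi j + s j)^2 + bG j * (real N * xi j + s j))
        - ((1/2) * AG j * s j ^ 2 + bG j * s j))"
    by (rule sum.cong) (auto simp: E_def power2_eq_square algebra_simps)
  also have "\<dots> = JG M AG bG (\<lambda>j. real N * xi j + s j) - JG M AG bG s"
    unfolding JG_def by (simp add: sum.distrib sum_subtractf sum_distrib_left mult.assoc)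
  finally show ?thesis .
qed

lemma Kbar_i_convex:
  assumes "x \<in> Kbar_i M N F" "y \<in> Kbar_i M N F" "0 \<le> t" "t \<le> 1"
  shows "(\<lambda>j. x j + t * (y j - x j)) \<in> Kbar_i M N F"
proof -
  have xs: "\<forall>j\<in>M. 0 \<le> x j" "\<forall>j. j \<notin> M \<longrightarrow> x j = 0" "(\<Sum>j\<in>M. x j) = 1"
    and xS: "\<forall>S. S \<subset> M \<longrightarrow> real N * (\<Sum>j\<in>S. x j) \<le> max 0 (real (card (\<Union>j\<in>S. F j)) - real (card S))"
    using assms(1) unfolding Kbar_i_def prob_simplex_def by auto
  have ys: "\<forall>j\<in>M. 0 \<le> y j" "\<forall>j. j \<notin> M \<longrightarrow> y j = 0" "(\<Sum>j\<in>M. y j) = 1"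
    and yS: "\<forall>S. S \<subset> M \<longrightarrow> real N * (\<Sum>j\<in>S. y j) \<le> max 0 (real (card (\<Union>j\<in>S. F j)) - real (card S))"
    using assms(2) unfolding Kbar_i_def prob_simplex_def by auto
  have conv: "\<And>j. x j + t * (y j - x j) = (1 - t) * x j + t * y j" by (simp add: algebra_simps)
  have "\<forall>j\<in>M. 0 \<le> x j + t * (y j - x j)"
    using xs(1) ys(1) assms(3,4) unfolding conv by (simp add: add_nonneg_nonneg)
  moreover have "\<forall>j. j \<notin> M \<longrightarrow> x j + t * (y j - x j) = 0" using xs(2) ys(2) by simp
  moreover have "(\<Sum>j\<in>M. x j + t * (y j - x j)) = 1"
    using xs(3) ys(3) by (simp add: sum.distrib sum_subtractf sum_distrib_left[symmetric])
  moreover have "\<forall>S. S \<subset> M \<longrightarrow> real N * (\<Sum>j\<in>S. x j + t * (y j - x j)) \<le> max 0 (real (card (\<Union>j\<in>S. F j)) - real (card S))"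
  proof (intro allI impI)
    fix S assume S: "S \<subset> M"
    let ?R = "max 0 (real (card (\<Union>j\<in>S. F j)) - real (card S))"
    have "real N * (\<Sum>j\<in>S. x j + t * (y j - x j)) = (1 - t) * (real N * (\<Sum>j\<in>S. x j)) + t * (real N * (\<Sum>j\<in>S. y j))"
      by (simp add: sum.distrib sum_subtractf sum_distrib_left[symmetric] algebra_simps)
    also have "\<dots> \<le> (1 - t) * ?R + t * ?R"
      using xS yS S assms(3,4) by (intro add_mono mult_left_mono) auto
    also have "\<dots> = ?R" by (simp add: algebra_simps)
    finally show "real N * (\<Sum>j\<in>S. x j + t * (y j - x j)) \<le> ?R" .
  qed
  ultimately show ?thesis unfolding Kbar_i_def prob_simplex_def by blast
qed

definition Gd :: "'m set \<Rightarrow> ('m \<Rightarrow> real) \<Rightarrow> ('m \<Rightarrow> real) \<Rightarrow> ('m \<Rightarrow> real) \<Rightarrow> ('m \<Rightarrow> real) \<Rightarrow> real" where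
  "Gd M AG bG s d = (\<Sum>j\<in>M. (AG j * s j + bG j) * d j)"

lemma JG_expand:
  "JG M AG bG (\<lambda>j. s j + t * d j) = JG M AG bG s + t * Gd M AG bG s d + t^2 / 2 * (\<Sum>j\<in>M. AG j * d j ^ 2)"
proof -
  have "JG M AG bG (\<lambda>j. s j + t * d j) - JG M AG bG s
      = (\<Sum>j\<in>M. ((1/2) * AG j * (s j + t * d j)^2 + bG j * (s j + t * d j)) - ((1/2) * AG j * s j ^ 2 + bG j * s j))"
    unfolding JG_def by (simp add: sum.distrib sum_subtractf sum_distrib_left mult.assoc)
  also have "\<dots> = (\<Sum>j\<in>M. t * ((AG j * s j + bG j) * d j) + t^2 / 2 * (AG j * d j ^ 2))"
    by (rule sum.cong) (auto simp: power2_eq_square algebra_simps)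
  also have "\<dots> = t * Gd M AG bG s d + t^2 / 2 * (\<Sum>j\<in>M. AG j * d j ^ 2)"
    unfolding Gd_def by (simp add: sum.distrib sum_distrib_left)
  finally show ?thesis by simp
qed

lemma key_ineq:
  fixes g Q :: real
  assumes "Q \<ge> 0" "\<forall>t. 0 < t \<and> t \<le> 1 \<longrightarrow> 0 \<le> t * g + t^2 / 2 * Q"
  shows "g \<ge> 0"
proof (rule ccontr)
  assume neg: "\<not> g \<ge> 0"
  define t where "t = (if Q = 0 then 1 else min 1 (- g / Q))"
  have t0: "0 < t" "t \<le> 1" using neg assms(1) by (auto simp: t_def divide_neg_pos)
  have "t * Q \<le> - g"
  proof (cases "Q = 0")
    case True thus ?thesis using neg by (simp add: t_def)
  next
    case False
    hence "t \<le> - g / Q" by (simp add: t_def)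
    hence "t * Q \<le> (- g / Q) * Q" using assms(1) by (intro mult_right_mono) auto
    thus ?thesis using False by simp
  qed
  hence "g + t / 2 * Q < 0" using neg by (simp add: field_simps)
  hence "t * (g + t / 2 * Q) < 0" using t0 by (simp add: mult_pos_neg)
  moreover have "0 \<le> t * g + t^2 / 2 * Q" using assms(2) t0 by blast
  ultimately show False by (simp add: power2_eq_square algebra_simps)
qed

theorem theorem2:
  fixes C :: "'c set" and M :: "'m set" and V :: "'c \<Rightarrow> 'v set" and F :: "'c \<Rightarrow> 'm \<Rightarrow> 'v set"
    and AG bG :: "'m \<Rightarrow> real" and A B c f D :: "'c \<Rightarrow> 'm \<Rightarrow> real"
    and xs :: "'c \<Rightarrow> 'm \<Rightarrow> real"
  assumes C_fin: "finite C" and C_ne: "C \<noteq> {}"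
    and M_fin: "finite M" and M_card: "card M \<ge> 2"
    and V_fin: "\<forall>i\<in>C. finite (V i)" and V_ne: "\<forall>i\<in>C. card (V i) \<ge> 1"
    and F_sub: "\<forall>i\<in>C. \<forall>j\<in>M. F i j \<subseteq> V i"
    and AG_pos: "\<forall>j\<in>M. AG j > 0"
    and D_nonneg: "\<forall>i\<in>C. \<forall>j\<in>M. D i j \<ge> 0"
    and D_pos: "\<forall>i\<in>C. \<forall>j\<in>M. F i j \<noteq> {} \<longrightarrow> D i j > 0"
    and reach: "\<forall>i\<in>C. \<forall>v\<in>V i. \<exists>j\<in>M. v \<in> F i j"
    and K_ne: "\<forall>i\<in>C. Kbar_i M (card (V i)) (F i) \<noteq> {}"
    and NE: "nash_eq C M V F AG bG A B c f D xs"
  shows "xs \<in> Kbar C M V F \<and>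
         (\<forall>y\<in>Kbar C M V F. JG M AG bG (agg C V xs) \<le> JG M AG bG (agg C V y))"
proof -
  let ?N = "\<lambda>i. real (card (V i))"
  let ?\<sigma> = "agg C V xs"
  have xsK: "xs \<in> Kbar C M V F" using NE unfolding nash_eq_def by blast
  have Q0: "(\<Sum>j\<in>M. AG j * d j ^ 2) \<ge> 0" for d :: "'m \<Rightarrow> real"
    using AG_pos by (intro sum_nonneg) (simp add: less_imp_le)
  have split: "?\<sigma> = (\<lambda>j. ?N i * xs i j + agg (C - {i}) V xs j)" if "i \<in> C" for i
    unfolding agg_def using sum.remove[OF C_fin that] by (auto intro!: ext)
  show ?thesis
  proof (intro conjI ballI)
    show "xs \<in> Kbar C M V F" by (rule xsK)
  next
    fix y assume yK: "y \<in> Kbar C M V F"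
    define d where "d i j = ?N i * (y i j - xs i j)" for i j
    have Gi: "Gd M AG bG ?\<sigma> (d i) \<ge> 0" if iC: "i \<in> C" for i
    proof (rule key_ineq[OF Q0], intro allI impI)
      fix t :: real assume t: "0 < t \<and> t \<le> 1"
      let ?s = "agg (C - {i}) V xs"
      have xi: "xs i \<in> Kbar_i M (card (V i)) (F i)" using xsK iC unfolding Kbar_def by blast
      have yi: "y i \<in> Kbar_i M (card (V i)) (F i)" using yK iC unfolding Kbar_def by blast
      define z where "z = (\<lambda>j. xs i j + t * (y i j - xs i j))"
      have zK: "z \<in> Kbar_i M (card (V i)) (F i)" unfolding z_def
        using Kbar_i_convex[OF xi yi] t by simp
      have ne: "Jcomp M AG bG (card (V i)) (A i) (B i) (c i) (f i) (D i) (xs i) ?s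
        \<le> Jcomp M AG bG (card (V i)) (A i) (B i) (c i) (f i) (D i) z ?s"
        using NE zK iC unfolding nash_eq_def by blast
      have hyps: "card (V i) \<ge> 1" "\<forall>j\<in>M. D i j \<ge> 0" "\<forall>j\<in>M. F i j \<noteq> {} \<longrightarrow> D i j > 0"
        using V_ne D_nonneg D_pos iC by auto
      have e1: "(\<lambda>j. ?N i * xs i j + ?s j) = ?\<sigma>" using split[OF iC] by simp
      have e2: "(\<lambda>j. ?N i * z j + ?s j) = (\<lambda>j. ?\<sigma> j + t * d i j)"
        using split[OF iC] by (auto simp: z_def d_def algebra_simps intro!: ext)
      from ne have "JG M AG bG ?\<sigma> \<le> JG M AG bG (\<lambda>j. ?\<sigma> j + t * d i j)"
        unfolding Jcomp_eq[OF M_fin M_card hyps xi] Jcomp_eq[OF M_fin M_card hyps zK] e1 e2 by simp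
      thus "0 \<le> t * Gd M AG bG ?\<sigma> (d i) + t^2 / 2 * (\<Sum>j\<in>M. AG j * d i j ^ 2)"
        unfolding JG_expand by simp
    qed
    define \<Delta> where "\<Delta> j = (\<Sum>i\<in>C. d i j)" for j
    have dy: "agg C V y = (\<lambda>j. ?\<sigma> j + 1 * \<Delta> j)"
    proof (rule ext)
      fix j
      have "(\<Sum>i\<in>C. ?N i * (y i j - xs i j)) = (\<Sum>i\<in>C. ?N i * y i j) - (\<Sum>i\<in>C. ?N i * xs i j)"
        by (simp add: right_diff_distrib sum_subtractf)
      thus "agg C V y j = ?\<sigma> j + 1 * \<Delta> j" unfolding agg_def \<Delta>_def d_def by simp
    qed
    have "Gd M AG bG ?\<sigma> \<Delta> = (\<Sum>i\<in>C. Gd M AG bG ?\<sigma> (d i))"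
      unfolding Gd_def \<Delta>_def by (simp add: sum_distrib_left sum.swap[of _ C])
    also have "\<dots> \<ge> 0" using Gi by (intro sum_nonneg) auto
    finally have "Gd M AG bG ?\<sigma> \<Delta> \<ge> 0" .
    thus "JG M AG bG ?\<sigma> \<le> JG M AG bG (agg C V y)"
      unfolding dy JG_expand using Q0[of \<Delta>] by simp
  qed
qed

end
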